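(* Let $s$, $k$ and $i\le k$ be job indices with $r_i\ge r_s$. Let $C^{\mathrm{edf}}$ denote the minimum completion time $C_i(S)$ over all $(s,k)$-schedules $S$ having the earliest-deadline property that schedule job $i$. Then $$C^{\mathrm{edf}}=C_i(G_{s,k})=\max_{\substack{l\le i\\ r_s\le r_l\le r_i}}\ \min\{\,b\in\mathbb{Z} : b>r_i \text{ and } b\ge r_l+\mathrm{load}_i(r_l,b)\,\}.$$ In particular this value does not depend on $k$.
   Context: Time is discrete (slots $[t,t+1)$, $t\in\mathbb{Z}$). There are $n$ jobs, job $j$ with integer processing time $p_j\ge1$, release time $r_j$, deadline $d_j$; jobs are indexed so that $d_1<d_2<\dots<d_n$, release times are pairwise distinct, and the instance is feasible (some schedule executes every job $j$ for $p_j$ slots within $[r_j,d_j)$). A (partial) schedule assigns to each slot at most one job so that every job it schedules receives exactly $p_j$ slots within $[r_j,d_j)$. $C_j(S)$ is the end of the last slot of job $j$ in $S$ and $C_{\max}(S)=\max_j C_j(S)$. $S$ has the earliest-deadline property if whenever it is busy at slot $t$ it executes, among the jobs it schedules that are released by $t$ and not yet completed, the one with the smallest deadline. For $s\in\{1,\dots,n\}$, $k\in\{0,\dots,n\}$, an $(s,k)$-schedule is a schedule $S$ with $C_{\max}(S)\le d_k$ that schedules exactly the jobs $j\le k$ with $r_s\le r_j<C_{\max}(S)$; the empty schedule is an $(s,k)$-schedule with $C_{\max}=r_s$. The greedy schedule $G_{s,k}$ schedules the jobs $j\le k$ with $r_j\ge r_s$ by, at each slot $t=r_s,r_s+1,\dots$,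 executing the released, not yet completed such job of smallest deadline (idling if none). For a job $i$ and times $a<b$, $\mathrm{load}_i(a,b)=\sum_{j\le i,\ a\le r_j<b}p_j$. *)

theory Defs
  imports Main
begin

(* Jobs are indexed by 1..n; times are integers; slot t is [t,t+1).
   A schedule is a map from slots to "at most one job" (None = idle). *)
type_synonym schedule = "int \<Rightarrow> nat option"

definition sched_jobs :: "schedule \<Rightarrow> nat set" where
  "sched_jobs S = {j. \<exists>t. S t = Some j}"

definition compl :: "schedule \<Rightarrow> nat \<Rightarrow> int" where
  "compl S j = Max {t + 1 | t. S t = Some j}"

definition valid_sched :: "nat \<Rightarrow> (nat \<Rightarrow> int) \<Rightarrow> (nat \<Rightarrow> int) \<Rightarrow> (nat \<Rightarrow> int) \<Rightarrow> schedule \<Rightarrow> bool" where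
  "valid_sched n p r d S \<longleftrightarrow>
     (\<forall>t j. S t = Some j \<longrightarrow> 1 \<le> j \<and> j \<le> n \<and> r j \<le> t \<and> t < d j) \<and>
     (\<forall>j \<in> sched_jobs S. int (card {t. S t = Some j}) = p j)"

(* C_max(S); for the empty schedule the convention C_max = r_s of (s,k)-schedules is used *)
definition cmax :: "(nat \<Rightarrow> int) \<Rightarrow> nat \<Rightarrow> schedule \<Rightarrow> int" where
  "cmax r s S = (if sched_jobs S = {} then r s else Max (compl S ` sched_jobs S))"

definition sk_schedule :: "nat \<Rightarrow> (nat \<Rightarrow> int) \<Rightarrow> (nat \<Rightarrow> int) \<Rightarrow> (nat \<Rightarrow> int) \<Rightarrow> nat \<Rightarrow> nat \<Rightarrow> schedule \<Rightarrow> bool" where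
  "sk_schedule n p r d s k S \<longleftrightarrow>
     valid_sched n p r d S \<and> cmax r s S \<le> d k \<and>
     sched_jobs S = {j. 1 \<le> j \<and> j \<le> k \<and> r s \<le> r j \<and> r j < cmax r s S}"

definition edf :: "(nat \<Rightarrow> int) \<Rightarrow> (nat \<Rightarrow> int) \<Rightarrow> schedule \<Rightarrow> bool" where
  "edf r d S \<longleftrightarrow>
     (\<forall>t j. S t = Some j \<longrightarrow>
        (\<forall>j' \<in> sched_jobs S. r j' \<le> t \<and> t < compl S j' \<longrightarrow> d j \<le> d j'))"

(* greedy schedule G_{s,k}: choice at offset m (slot r_s + m) given remaining work R *)
definition gpick :: "(nat \<Rightarrow> int) \<Rightarrow> (nat \<Rightarrow> int) \<Rightarrow> nat \<Rightarrow> nat \<Rightarrow> (nat \<Rightarrow> int) \<Rightarrow> nat \<Rightarrow> nat option" where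
  "gpick r d s k R m =
     (let A = {j. 1 \<le> j \<and> j \<le> k \<and> r s \<le> r j \<and> r j \<le> r s + int m \<and> R j > 0} in
      if A = {} then None else Some (SOME j. j \<in> A \<and> (\<forall>j' \<in> A. d j \<le> d j')))"

(* remaining processing times at the start of slot r_s + m *)
fun grem :: "(nat \<Rightarrow> int) \<Rightarrow> (nat \<Rightarrow> int) \<Rightarrow> (nat \<Rightarrow> int) \<Rightarrow> nat \<Rightarrow> nat \<Rightarrow> nat \<Rightarrow> (nat \<Rightarrow> int)" where
  "grem p r d s k 0 = p"
| "grem p r d s k (Suc m) =
     (let R = grem p r d s k m in
      case gpick r d s k R m of None \<Rightarrow> R | Some j \<Rightarrow> R(j := R j - 1))"

definition greedy :: "(nat \<Rightarrow> int) \<Rightarrow> (nat \<Rightarrow> int) \<Rightarrow> (nat \<Rightarrow> int) \<Rightarrow> nat \<Rightarrow> nat \<Rightarrow> schedule" where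
  "greedy p r d s k t =
     (if t < r s then None
      else gpick r d s k (grem p r d s k (nat (t - r s))) (nat (t - r s)))"

definition load :: "(nat \<Rightarrow> int) \<Rightarrow> (nat \<Rightarrow> int) \<Rightarrow> nat \<Rightarrow> int \<Rightarrow> int \<Rightarrow> int" where
  "load p r i a b = (\<Sum>j \<in> {j. 1 \<le> j \<and> j \<le> i \<and> a \<le> r j \<and> r j < b}. p j)"

end

theory Submission
  imports Defs
begin


lemma sum_upd: "finite A \<Longrightarrow> x \<in> A \<Longrightarrow> sum (f(x := v)) A = sum f A - f x + (v::int)"
proof -
  assume f: "finite A" and x: "x \<in> A"
  have "sum (f(x := v)) A = (f(x:=v)) x + sum (f(x := v)) (A - {x})" using sum.remove[OF f x] by blast
  also have "sum (f(x := v)) (A - {x}) = sum f (A - {x})" by (rule sum.cong) auto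
  also have "sum f (A - {x}) = sum f A - f x" using sum.remove[OF f x, of f] by simp
  finally show ?thesis by simp
qed

lemma int_least:
  fixes P :: "int \<Rightarrow> bool"
  assumes "P x" "\<And>y. P y \<Longrightarrow> lo \<le> y"
  shows "P (LEAST b. P b) \<and> (\<forall>y. P y \<longrightarrow> (LEAST b. P b) \<le> y)"
proof -
  have ex: "P (lo + int (nat (x - lo)))" using assms by simp
  define n0 where "n0 = (LEAST n::nat. P (lo + int n))"
  have P0: "P (lo + int n0)" unfolding n0_def by (rule LeastI[where P="\<lambda>n. P (lo + int n)", OF ex])
  have min: "lo + int n0 \<le> y" if "P y" for y
  proof -
    have "y = lo + int (nat (y - lo))" using assms(2)[OF that] by simp
    with that have "P (lo + int (nat (y - lo)))" by simp
    hence "n0 \<le> nat (y - lo)" unfolding n0_def by (rule Least_le)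
    thus ?thesis using assms(2)[OF that] by simp
  qed
  have "(LEAST b. P b) = lo + int n0" by (rule Least_equality[where P=P, OF P0 min])
  thus ?thesis using P0 min by simp
qed

lemma packing:
  assumes v: "valid_sched n p r d S" and fA: "finite A" and As: "A \<subseteq> sched_jobs S"
    and sl: "\<And>x t. x \<in> A \<Longrightarrow> S t = Some x \<Longrightarrow> a \<le> t \<and> t < b" and ab: "a \<le> b"
  shows "(\<Sum>x\<in>A. p x) \<le> b - a"
proof -
  have c: "p x = int (card {t. S t = Some x})" if "x \<in> A" for x
    using v As that unfolding valid_sched_def by auto
  have sub: "{t. S t = Some x} \<subseteq> {a..<b}" if "x \<in> A" for x using sl[OF that] by auto
  have fin: "finite {t. S t = Some x}" if "x \<in> A" for x using sub[OF that] finite_subset by blast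
  have "(\<Sum>x\<in>A. p x) = (\<Sum>x\<in>A. int (card {t. S t = Some x}))" using c by (rule sum.cong[OF refl])
  also have "\<dots> = int (\<Sum>x\<in>A. card {t. S t = Some x})" by simp
  also have "(\<Sum>x\<in>A. card {t. S t = Some x}) = card (\<Union>x\<in>A. {t. S t = Some x})"
    by (rule card_UN_disjoint[symmetric]) (use fA fin in auto)
  also have "card (\<Union>x\<in>A. {t. S t = Some x}) \<le> card {a..<b}"
    by (rule card_mono) (use sub in auto)
  also have "card {a..<b} = nat (b - a)" by simp
  finally show ?thesis using ab by linarith
qed

declare grem.simps(2)[simp del]

locale GR =
  fixes n :: nat and p r d :: "nat \<Rightarrow> int" and s k :: nat
  assumes p_pos: "\<And>j. 1 \<le> j \<Longrightarrow> j \<le> n \<Longrightarrow> p j \<ge> 1"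
    and d_mono: "\<And>j j'. 1 \<le> j \<Longrightarrow> j < j' \<Longrightarrow> j' \<le> n \<Longrightarrow> d j < d j'"
    and kn: "k \<le> n"
begin

definition J where "J = {j. 1 \<le> j \<and> j \<le> k \<and> r s \<le> r j}"
abbreviation R where "R m \<equiv> grem p r d s k m"
abbreviation pk where "pk m \<equiv> gpick r d s k (R m) m"
definition Av where "Av m = {j \<in> J. r j \<le> r s + int m \<and> R m j > 0}"

lemma finJ: "finite J" unfolding J_def by (rule finite_subset[of _ "{..k}"]) auto

lemma d_le: "1 \<le> x \<Longrightarrow> x \<le> y \<Longrightarrow> y \<le> n \<Longrightarrow> d x \<le> d y"
  using d_mono by (cases "x = y") (auto intro: less_imp_le)

lemma d_le_inv: "1 \<le> x \<Longrightarrow> 1 \<le> y \<Longrightarrow> x \<le> n \<Longrightarrow> y \<le> n \<Longrightarrow> d x \<le> d y \<Longrightarrow> x \<le> y"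
  using d_mono[of y x] by force

lemma pk_None: "pk m = None \<longleftrightarrow> Av m = {}"
  unfolding gpick_def Av_def J_def Let_def by auto

lemma pk_Some: assumes "pk m = Some j" shows "j \<in> Av m \<and> (\<forall>j'\<in>Av m. d j \<le> d j')"
proof -
  have ne: "Av m \<noteq> {}" using pk_None[of m] assms by simp
  have fin: "finite (Av m)" using finJ unfolding Av_def by auto
  have "Min (d ` Av m) \<in> d ` Av m" using fin ne by simp
  then obtain x where x: "x \<in> Av m" "d x = Min (d ` Av m)" by auto
  have ex: "\<exists>j. j \<in> Av m \<and> (\<forall>j'\<in>Av m. d j \<le> d j')" using x fin by auto
  have A: "{j. 1 \<le> j \<and> j \<le> k \<and> r s \<le> r j \<and> r j \<le> r s + int m \<and> R m j > 0} = Av m"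
    unfolding Av_def J_def by auto
  have "pk m = Some (SOME j. j \<in> Av m \<and> (\<forall>j'\<in>Av m. d j \<le> d j'))"
    using ne unfolding gpick_def Let_def A by simp
  with assms have "j = (SOME j. j \<in> Av m \<and> (\<forall>j'\<in>Av m. d j \<le> d j'))" by simp
  thus ?thesis using someI_ex[OF ex] by simp
qed

lemma pk_J: "pk m = Some j \<Longrightarrow> j \<in> J" using pk_Some Av_def by auto

lemma R_Suc: "R (Suc m) = (case pk m of None \<Rightarrow> R m | Some j \<Rightarrow> (R m)(j := R m j - 1))"
  by (simp add: Let_def grem.simps(2))

lemma R_mono1: "R (Suc m) j \<le> R m j"
  by (cases "pk m") (auto simp: R_Suc)

lemma R_mono: "m \<le> m' \<Longrightarrow> R m' j \<le> R m j"
proof (induction m' rule: dec_induct)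
  case (step q) thus ?case using R_mono1[of q j] by simp
qed simp

lemma R_nonneg: "R m j \<ge> 0" if "j \<in> J"
proof (induction m)
  case 0 thus ?case using that p_pos kn unfolding J_def by force
next
  case (Suc m)
  show ?case
  proof (cases "pk m")
    case None thus ?thesis using Suc by (simp add: R_Suc)
  next
    case (Some j')
    hence "j' \<in> Av m" using pk_Some by blast
    thus ?thesis using Suc Some by (auto simp: R_Suc Av_def)
  qed
qed

lemma R_pick: "pk m = Some j \<Longrightarrow> R (Suc m) j = R m j - 1" by (simp add: R_Suc)
lemma R_nopick: "pk m \<noteq> Some j \<Longrightarrow> R (Suc m) j = R m j" by (cases "pk m") (auto simp: R_Suc)

lemma R_unrel: "r s + int m \<le> r j \<Longrightarrow> R m j = p j"
proof (induction m)
  case 0 thus ?case by simp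
next
  case (Suc m)
  have "pk m \<noteq> Some j" using pk_Some[of m j] Suc.prems unfolding Av_def by auto
  thus ?case using Suc by (simp add: R_nopick)
qed

end

context GR begin

definition Tot where "Tot m = (\<Sum>x\<in>J. R m x)"

lemma Tot_nonneg: "Tot m \<ge> 0" unfolding Tot_def using R_nonneg by (simp add: sum_nonneg)

lemma Tot_Suc: "Tot (Suc m) = Tot m - (if pk m = None then 0 else 1)"
proof (cases "pk m")
  case None thus ?thesis unfolding Tot_def by (simp add: R_Suc)
next
  case (Some j)
  hence j: "j \<in> J" by (rule pk_J)
  have "R (Suc m) = (R m)(j := R m j - 1)" by (simp add: R_Suc Some)
  thus ?thesis using Some unfolding Tot_def by (simp only: sum_upd[OF finJ j]) simp
qed

lemma Tot_pos: "pk m = Some j \<Longrightarrow> Tot m > 0"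
proof -
  assume a: "pk m = Some j"
  hence j: "j \<in> Av m" using pk_Some by blast
  hence "R m j \<le> Tot m" unfolding Tot_def
    by (intro member_le_sum) (auto simp: Av_def intro: R_nonneg finJ)
  thus ?thesis using j by (auto simp: Av_def)
qed

lemma finish: "\<exists>m. \<forall>j\<in>J. R m j = 0"
proof -
  define M0 where "M0 = (\<Sum>x\<in>J. nat (r x - r s))"
  have rel: "r x \<le> r s + int M0" if "x \<in> J" for x
  proof -
    have "nat (r x - r s) \<le> M0" unfolding M0_def by (rule member_le_sum) (use that finJ in auto)
    thus ?thesis using that by (auto simp: J_def)
  qed
  have zero: "Tot m = 0" if "M0 \<le> m" "pk m = None" for m
  proof -
    have "Av m = {}" using that pk_None by simp
    have "R m x = 0" if x: "x \<in> J" for x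
    proof (rule ccontr)
      assume "R m x \<noteq> 0"
      hence "R m x > 0" using R_nonneg[OF x, of m] by simp
      moreover have "r x \<le> r s + int m" using rel[OF x] \<open>M0 \<le> m\<close> by simp
      ultimately have "x \<in> Av m" using x unfolding Av_def by simp
      thus False using \<open>Av m = {}\<close> by simp
    qed
    thus ?thesis unfolding Tot_def by simp
  qed
  have main: "Tot (M0 + q) \<le> max 0 (Tot M0 - int q)" for q
  proof (induction q)
    case 0 thus ?case by simp
  next
    case (Suc q)
    show ?case
    proof (cases "pk (M0 + q)")
      case None thus ?thesis using zero[of "M0+q"] Tot_Suc[of "M0+q"] by simp
    next
      case (Some j)
      thus ?thesis using Tot_pos[OF Some] Tot_Suc[of "M0+q"] Suc by simp
    qed
  qed
  have "Tot (M0 + nat (Tot M0)) \<le> 0" using main[of "nat (Tot M0)"] Tot_nonneg by simp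
  hence "Tot (M0 + nat (Tot M0)) = 0" using Tot_nonneg by (meson order.antisym)
  hence "\<forall>j\<in>J. R (M0 + nat (Tot M0)) j = 0" unfolding Tot_def
    using sum_nonneg_eq_0_iff[OF finJ] R_nonneg by blast
  thus ?thesis by blast
qed

definition c where "c j = (LEAST m. R m j = 0)"

lemma c_props:
  assumes j: "j \<in> J"
  shows "R (c j) j = 0" "\<And>m. m < c j \<Longrightarrow> R m j > 0" "\<And>m. c j \<le> m \<Longrightarrow> R m j = 0"
proof -
  obtain m0 where "R m0 j = 0" using finish j by blast
  thus c0: "R (c j) j = 0" unfolding c_def by (rule LeastI)
  show "R m j > 0" if "m < c j" for m
  proof -
    have "R m j \<noteq> 0" using not_less_Least[OF that[unfolded c_def]] by simp
    thus ?thesis using R_nonneg[OF j, of m] by simp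
  qed
  show "R m j = 0" if "c j \<le> m" for m using R_mono[OF that, of j] c0 R_nonneg[OF j, of m] by simp
qed

lemma pick_lt_c: "pk m = Some j \<Longrightarrow> m < c j"
proof -
  assume a: "pk m = Some j"
  hence "j \<in> J" "R m j > 0" using pk_Some Av_def by auto
  show ?thesis
  proof (rule ccontr)
    assume "\<not> m < c j"
    hence "R m j = 0" using c_props(3) \<open>j \<in> J\<close> by simp
    thus False using \<open>R m j > 0\<close> by simp
  qed
qed

lemma c_pos: "j \<in> J \<Longrightarrow> 0 < c j"
proof -
  assume j: "j \<in> J"
  have "R 0 j > 0" using j p_pos kn by (force simp: J_def)
  thus ?thesis using c_props(1)[OF j] by (metis gr0I less_irrefl)
qed

lemma pick_last: assumes j: "j \<in> J" shows "pk (c j - 1) = Some j"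
proof -
  have "R (Suc (c j - 1)) j \<noteq> R (c j - 1) j"
    using c_props(1)[OF j] c_props(2)[OF j, of "c j - 1"] c_pos[OF j] by simp
  thus ?thesis using R_nopick by blast
qed

lemma c_rel: assumes j: "j \<in> J" shows "r j < r s + int (c j)"
  using pk_Some[OF pick_last[OF j]] c_pos[OF j] unfolding Av_def by auto

lemma count: "j \<in> J \<Longrightarrow> int (card {m. m < M \<and> pk m = Some j}) = p j - R M j"
proof (induction M)
  case 0 thus ?case by simp
next
  case (Suc M)
  have e: "{m. m < Suc M \<and> pk m = Some j} = {m. m < M \<and> pk m = Some j} \<union> (if pk M = Some j then {M} else {})"
    by (auto simp: less_Suc_eq)
  show ?case
  proof (cases "pk M = Some j")
    case True
    have "card {m. m < Suc M \<and> pk m = Some j} = Suc (card {m. m < M \<and> pk m = Some j})"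
      unfolding e using True by simp
    thus ?thesis using Suc True R_pick[OF True] by simp
  next
    case False
    have "{m. m < Suc M \<and> pk m = Some j} = {m. m < M \<and> pk m = Some j}"
      using False less_Suc_eq by auto
    thus ?thesis using Suc R_nopick[OF False] by simp
  qed
qed

abbreviation G where "G \<equiv> greedy p r d s k"

lemma G_iff: "G t = Some j \<longleftrightarrow> (\<exists>m. t = r s + int m \<and> pk m = Some j)"
proof
  assume "G t = Some j"
  hence "r s \<le> t" "pk (nat (t - r s)) = Some j" unfolding greedy_def by (auto split: if_splits)
  thus "\<exists>m. t = r s + int m \<and> pk m = Some j" by (intro exI[of _ "nat (t - r s)"]) auto
next
  assume "\<exists>m. t = r s + int m \<and> pk m = Some j"
  then obtain m where "t = r s + int m" "pk m = Some j" by blast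
  thus "G t = Some j" unfolding greedy_def by simp
qed

lemma G_slots: "j \<in> J \<Longrightarrow> {t. G t = Some j} = (\<lambda>m. r s + int m) ` {m. m < c j \<and> pk m = Some j}"
  using G_iff pick_lt_c by auto

lemma G_card: "j \<in> J \<Longrightarrow> int (card {t. G t = Some j}) = p j"
proof -
  assume j: "j \<in> J"
  have "card {t. G t = Some j} = card {m. m < c j \<and> pk m = Some j}"
    unfolding G_slots[OF j] by (rule card_image) (auto simp: inj_on_def)
  thus ?thesis using count[OF j, of "c j"] c_props(1)[OF j] by simp
qed

lemma G_jobs: "sched_jobs G = J"
proof
  show "sched_jobs G \<subseteq> J" unfolding sched_jobs_def using G_iff pk_J by blast
  show "J \<subseteq> sched_jobs G" unfolding sched_jobs_def using G_iff pick_last by blast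
qed

lemma G_compl: assumes j: "j \<in> J" shows "compl G j = r s + int (c j)"
proof -
  have eq: "{t + 1 | t. G t = Some j} = (\<lambda>t. t + 1) ` {t. G t = Some j}" by auto
  have fin: "finite {t + 1 | t. G t = Some j}" unfolding eq G_slots[OF j] by simp
  have mem: "r s + int (c j) \<in> {t + 1 | t. G t = Some j}"
    using G_iff[of "r s + int (c j - 1)" j] pick_last[OF j] c_pos[OF j]
    by (intro CollectI exI[of _ "r s + int (c j - 1)"]) auto
  have le: "x \<le> r s + int (c j)" if "x \<in> {t + 1 | t. G t = Some j}" for x
    using that G_iff pick_lt_c by fastforce
  show ?thesis unfolding compl_def by (rule Max_eqI[OF fin le mem])
qed

end


lemma load_add:
  assumes "a \<le> b" "b \<le> c"
  shows "load p r i a c = load p r i a b + load p r i b c"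
proof -
  have e: "{j. 1 \<le> j \<and> j \<le> i \<and> a \<le> r j \<and> r j < c} =
        {j. 1 \<le> j \<and> j \<le> i \<and> a \<le> r j \<and> r j < b} \<union> {j. 1 \<le> j \<and> j \<le> i \<and> b \<le> r j \<and> r j < c}"
    using assms by auto
  have f1: "finite {j. 1 \<le> j \<and> j \<le> i \<and> a \<le> r j \<and> r j < b}" by (rule finite_subset[of _ "{..i}"]) auto
  have f2: "finite {j. 1 \<le> j \<and> j \<le> i \<and> b \<le> r j \<and> r j < c}" by (rule finite_subset[of _ "{..i}"]) auto
  show ?thesis unfolding load_def e by (rule sum.union_disjoint[OF f1 f2]) auto
qed

lemma load_empty: "load p r i a a = 0" unfolding load_def by (rule sum.neutral) auto

context GR begin

definition X where "X i = {x \<in> J. x \<le> i}"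
definition B where "B i m = (\<Sum>x\<in>{x \<in> X i. r x < r s + int m}. R m x)"

lemma finX: "finite {x \<in> X i. P x}" unfolding X_def using finJ by simp

lemma B_nonneg: "B i m \<ge> 0" unfolding B_def X_def by (intro sum_nonneg) (auto intro: R_nonneg)

lemma load_nonneg: "i \<le> n \<Longrightarrow> load p r i a b \<ge> 0"
  unfolding load_def using p_pos by (intro sum_nonneg) force

lemma lset_X: "i \<in> J \<Longrightarrow> r s \<le> a \<Longrightarrow>
   {j. 1 \<le> j \<and> j \<le> i \<and> a \<le> r j \<and> r j < b} = {x \<in> X i. a \<le> r x \<and> r x < b}"
  unfolding X_def J_def by auto

lemma B0: "B i 0 = 0" unfolding B_def X_def J_def by (simp add: sum.neutral)

lemma B_rec_a:
  assumes i: "i \<in> J" and ne: "X i \<inter> Av m \<noteq> {}"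
  shows "B i (Suc m) = B i m + load p r i (r s + int m) (r s + int m + 1) - 1"
proof -
  obtain x where x: "x \<in> X i" "x \<in> Av m" using ne by blast
  obtain j where pj: "pk m = Some j" using pk_None[of m] x by auto
  have jA: "j \<in> Av m" and dj: "d j \<le> d x" using pk_Some[OF pj] x by auto
  have "d x \<le> d i" apply (rule d_le) using x i kn by (auto simp: X_def J_def Av_def)
  hence "j \<le> i" apply - apply (rule d_le_inv) using dj jA i kn by (auto simp: Av_def J_def)
  hence jX: "j \<in> X i" using jA by (auto simp: X_def Av_def)
  define Y where "Y = {x \<in> X i. r x < r s + int m}"
  define N where "N = {x \<in> X i. r x = r s + int m}"
  have Y': "{x \<in> X i. r x < r s + int (Suc m)} = Y \<union> N" unfolding Y_def N_def by auto
  have fY: "finite Y" "finite N" unfolding Y_def N_def using finX by auto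
  have jY': "j \<in> Y \<union> N" using jX jA unfolding Y_def N_def Av_def by auto
  have RS: "R (Suc m) = (R m)(j := R m j - 1)" by (simp add: R_Suc pj)
  have "B i (Suc m) = sum (R m) (Y \<union> N) - 1"
    unfolding B_def Y' RS by (simp only: sum_upd[OF _ jY'] fY finite_UnI)
  also have "sum (R m) (Y \<union> N) = sum (R m) Y + sum (R m) N"
    by (rule sum.union_disjoint) (use fY in \<open>auto simp: Y_def N_def\<close>)
  also have "sum (R m) N = sum p N" by (rule sum.cong) (auto simp: N_def intro: R_unrel)
  also have "sum p N = load p r i (r s + int m) (r s + int m + 1)"
    unfolding load_def N_def by (rule sum.cong) (use i in \<open>auto simp: X_def J_def\<close>)
  finally show ?thesis unfolding B_def Y_def by simp
qed

lemma B_rec_b: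
  assumes i: "i \<in> J" and e: "X i \<inter> Av m = {}"
  shows "B i (Suc m) = 0 \<and> B i m + load p r i (r s + int m) (r s + int m + 1) = 0"
proof -
  have z: "R m x = 0" if "x \<in> X i" "r x \<le> r s + int m" for x
  proof (rule ccontr)
    assume "R m x \<noteq> 0"
    hence "R m x > 0" using R_nonneg[of x m] that by (auto simp: X_def)
    hence "x \<in> Av m" using that by (auto simp: Av_def X_def)
    thus False using e that by auto
  qed
  have z1: "R (Suc m) x = 0" if "x \<in> X i" "r x \<le> r s + int m" for x
    using z[OF that] R_mono1[of m x] R_nonneg[of x "Suc m"] that by (auto simp: X_def)
  have "B i (Suc m) = 0" unfolding B_def by (rule sum.neutral) (auto intro!: z1)
  moreover have "B i m = 0" unfolding B_def by (rule sum.neutral) (auto intro!: z)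
  moreover have "load p r i (r s + int m) (r s + int m + 1) = 0"
  proof -
    have "{j. 1 \<le> j \<and> j \<le> i \<and> r s + int m \<le> r j \<and> r j < r s + int m + 1} = {}"
    proof (rule ccontr)
      assume "\<not> ?thesis"
      then obtain x where x0: "1 \<le> x" "x \<le> i" "r x = r s + int m" by auto
      hence x: "x \<in> X i" "r x = r s + int m" using i by (auto simp: X_def J_def)
      have "R m x = p x" using x by (intro R_unrel) simp
      moreover have "p x \<ge> 1" using x kn by (intro p_pos) (auto simp: X_def J_def)
      ultimately show False using z[OF x(1)] x(2) by simp
    qed
    note E = this
    show ?thesis unfolding load_def E by simp
  qed
  ultimately show ?thesis by simp
qed

lemma B_pos: assumes i: "i \<in> J" and b: "B i m > 0" shows "X i \<inter> Av m \<noteq> {}"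
proof
  assume e: "X i \<inter> Av m = {}"
  have "i \<le> n" using i kn by (auto simp: J_def)
  thus False using B_rec_b[OF i e] load_nonneg[OF \<open>i \<le> n\<close>, of "r s + int m" "r s + int m + 1"] b by linarith
qed

lemma key:
  assumes j: "j \<in> J"
  shows "\<exists>l. 1 \<le> l \<and> l \<le> j \<and> r s \<le> r l \<and> r l \<le> r j
     \<and> r l + load p r j (r l) (r s + int (c j)) = r s + int (c j)
     \<and> (\<forall>b. r l < b \<and> b < r s + int (c j) \<longrightarrow> b < r l + load p r j (r l) b)"
proof -
  have jn: "j \<le> n" using j kn by (auto simp: J_def)
  define aj where "aj = nat (r j - r s)"
  have rj: "r j = r s + int aj" using j unfolding aj_def J_def by auto
  have caj: "aj < c j" using c_rel[OF j] rj by simp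
  define ms where "ms = (GREATEST m. m \<le> aj \<and> B j m = 0)"
  have P0: "0 \<le> aj \<and> B j 0 = 0" using B0 by simp
  have msP: "ms \<le> aj \<and> B j ms = 0" unfolding ms_def by (rule GreatestI_nat[where P="\<lambda>m. m \<le> aj \<and> B j m = 0" and b=aj, OF P0]) simp
  have msG: "m \<le> ms" if "m \<le> aj" "B j m = 0" for m
    unfolding ms_def by (rule Greatest_le_nat[of _ m aj]) (use that in auto)
  have posB: "B j m > 0" if "ms < m" "m < c j" for m
  proof (cases "m \<le> aj")
    case True
    hence "B j m \<noteq> 0" using msG that by fastforce
    thus ?thesis using B_nonneg[of j m] by simp
  next
    case False
    have jm: "j \<in> {x \<in> X j. r x < r s + int m}" using j False rj by (auto simp: X_def)
    have "R m j \<le> B j m" unfolding B_def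
      by (rule member_le_sum[OF jm]) (use finX R_nonneg in \<open>auto simp: X_def\<close>)
    thus ?thesis using c_props(2)[OF j that(2)] by simp
  qed
  have av: "X j \<inter> Av m \<noteq> {}" if "ms \<le> m" "m < c j" for m
  proof (cases "Suc m < c j")
    case True
    hence "B j (Suc m) > 0" using posB that by simp
    thus ?thesis using B_rec_b[OF j, of m] by auto
  next
    case False
    hence "m = c j - 1" using that by simp
    hence "pk m = Some j" using pick_last[OF j] by simp
    hence "j \<in> Av m" using pk_Some by blast
    thus ?thesis using j by (auto simp: X_def)
  qed
  define T where "T = r s + int ms"
  have closed: "ms + q \<le> c j \<longrightarrow> B j (ms + q) = load p r j T (r s + int (ms + q)) - int q" for q
  proof (induction q)
    case 0 thus ?case using msP load_empty unfolding T_def by simp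
  next
    case (Suc q)
    show ?case
    proof
      assume a: "ms + Suc q \<le> c j"
      have e1: "B j (Suc (ms + q)) = B j (ms + q) + load p r j (r s + int (ms+q)) (r s + int (ms+q) + 1) - 1"
        using B_rec_a[OF j av[of "ms + q"]] a by simp
      have e2: "B j (ms + q) = load p r j T (r s + int (ms + q)) - int q" using Suc a by simp
      have e3: "load p r j T (r s + int (ms + q) + 1) = load p r j T (r s + int (ms + q)) + load p r j (r s + int (ms+q)) (r s + int (ms+q) + 1)"
        by (rule load_add) (auto simp: T_def)
      have e4: "r s + int (ms + Suc q) = r s + int (ms + q) + 1" by simp
      show "B j (ms + Suc q) = load p r j T (r s + int (ms + Suc q)) - int (Suc q)"
        unfolding e4 using e1 e2 e3 by simp
    qed
  qed
  have Bc: "B j (c j) = 0"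
    unfolding B_def
  proof (rule sum.neutral, rule ballI)
    fix x assume x: "x \<in> {x \<in> X j. r x < r s + int (c j)}"
    show "R (c j) x = 0"
    proof (cases "x = j")
      case True thus ?thesis using c_props(1)[OF j] by simp
    next
      case False
      hence xl: "x < j" using x by (auto simp: X_def)
      have xJ: "x \<in> J" using x by (auto simp: X_def)
      have pl: "pk (c j - 1) = Some j" using pick_last[OF j] .
      have "R (c j - 1) x \<le> 0"
      proof (rule ccontr)
        assume "\<not> ?thesis"
        hence "x \<in> Av (c j - 1)" using x xJ c_pos[OF j] by (auto simp: Av_def X_def)
        hence "d j \<le> d x" using pk_Some[OF pl] by blast
        moreover have "d x < d j" using d_mono[OF _ xl jn] xJ by (auto simp: J_def)
        ultimately show False by simp
      qed
      hence "R (c j) x \<le> 0" using R_mono[of "c j - 1" "c j" x] by simp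
      thus ?thesis using R_nonneg[OF xJ, of "c j"] by simp
    qed
  qed
  have cms: "ms < c j" using msP caj by simp
  have eqC: "T + load p r j T (r s + int (c j)) = r s + int (c j)"
    using closed[of "c j - ms"] cms Bc unfolding T_def by simp
  have gtb: "b < T + load p r j T b" if "T < b" "b < r s + int (c j)" for b
  proof -
    define m where "m = nat (b - r s)"
    have bm: "b = r s + int m" using that unfolding m_def T_def by simp
    have m1: "ms < m" "m < c j" using that bm unfolding T_def by auto
    have "B j m = load p r j T b - int (m - ms)" using closed[of "m - ms"] m1 bm by simp
    thus ?thesis using posB[OF m1] bm m1 unfolding T_def by simp
  qed
  have eqT: "r s + int (ms + 1) = T + 1" unfolding T_def by simp
  have "B j (ms + 1) = load p r j T (T + 1) - 1" using closed[of 1] cms unfolding eqT[symmetric] by simp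
  hence "load p r j T (T + 1) \<ge> 1" using B_nonneg[of j "ms + 1"] by simp
  hence "{x. 1 \<le> x \<and> x \<le> j \<and> T \<le> r x \<and> r x < T + 1} \<noteq> {}" unfolding load_def by (metis sum.empty not_one_le_zero)
  then obtain l where l: "1 \<le> l" "l \<le> j" "r l = T" by force
  have "r s \<le> r l" "r l \<le> r j" using l msP rj unfolding T_def by auto
  thus ?thesis using l eqC gtb by (intro exI[of _ l]) auto
qed

end


lemma compl_ge: "finite {t. S t = Some j} \<Longrightarrow> S t = Some j \<Longrightarrow> t + 1 \<le> compl S j"
proof -
  assume f: "finite {t. S t = Some j}" and t: "S t = Some j"
  have eq: "{t + 1 | t. S t = Some j} = (\<lambda>t. t + 1) ` {t. S t = Some j}" by auto
  have "t + 1 \<in> (\<lambda>t. t + 1) ` {t. S t = Some j}" using t by blast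
  moreover have "finite ((\<lambda>t. t + 1) ` {t. S t = Some j})" using f by blast
  ultimately show ?thesis unfolding compl_def eq by (rule Max_ge[rotated])
qed

lemma compl_in: "finite {t. S t = Some j} \<Longrightarrow> S t = Some j \<Longrightarrow> \<exists>t'. S t' = Some j \<and> compl S j = t' + 1"
proof -
  assume f: "finite {t. S t = Some j}" and t: "S t = Some j"
  have eq: "{t + 1 | t. S t = Some j} = (\<lambda>t. t + 1) ` {t. S t = Some j}" by auto
  have "(\<lambda>t. t + 1) ` {t. S t = Some j} \<noteq> {}" using t by blast
  moreover have "finite ((\<lambda>t. t + 1) ` {t. S t = Some j})" using f by blast
  ultimately have "compl S j \<in> (\<lambda>t. t + 1) ` {t. S t = Some j}" unfolding compl_def eq by (rule Max_in[rotated])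
  thus ?thesis by blast
qed

lemma slots_fin:
  assumes v: "valid_sched n p r d S" and j: "j \<in> sched_jobs S" and pj: "p j \<ge> 1"
  shows "finite {t. S t = Some j}"
proof -
  have "int (card {t. S t = Some j}) = p j" using v j unfolding valid_sched_def by auto
  hence "card {t. S t = Some j} \<noteq> 0" using pj by linarith
  thus ?thesis by (meson card.infinite)
qed

lemma lower:
  assumes p_pos: "\<And>j. 1 \<le> j \<Longrightarrow> j \<le> n \<Longrightarrow> p j \<ge> 1"
    and d_mono: "\<And>j j'. 1 \<le> j \<Longrightarrow> j < j' \<Longrightarrow> j' \<le> n \<Longrightarrow> d j < d j'"
    and S: "sk_schedule n p r d s k S" and e: "edf r d S" and iS: "i \<in> sched_jobs S"
    and i: "1 \<le> i" "i \<le> k" and kn: "k \<le> n" and l: "r s \<le> r l" "r l \<le> r i"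
  shows "r i < compl S i \<and> r l + load p r i (r l) (compl S i) \<le> compl S i"
proof -
  have v: "valid_sched n p r d S" and cm: "cmax r s S \<le> d k"
    and sj: "sched_jobs S = {j. 1 \<le> j \<and> j \<le> k \<and> r s \<le> r j \<and> r j < cmax r s S}"
    using S unfolding sk_schedule_def by auto
  have sjn: "x \<le> n" if "x \<in> sched_jobs S" for x using that sj kn by auto
  have fin: "finite {t. S t = Some x}" if "x \<in> sched_jobs S" for x
  proof -
    have "1 \<le> x" using that sj by blast
    hence "p x \<ge> 1" using p_pos sjn[OF that] by blast
    thus ?thesis using slots_fin[OF v that] by blast
  qed
  obtain t0 where t0: "S t0 = Some i" using iS unfolding sched_jobs_def by auto
  obtain ti where ti: "S ti = Some i" "compl S i = ti + 1" using compl_in[OF fin[OF iS] t0] by blast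
  define C where "C = compl S i"
  have rit: "r i \<le> ti" using v ti unfolding valid_sched_def by auto
  have finSJ: "finite (sched_jobs S)" by (rule finite_subset[of _ "{..n}"]) (use sjn in auto)
  have Ccm: "C \<le> cmax r s S" unfolding C_def cmax_def using iS finSJ by auto
  define A where "A = {j. 1 \<le> j \<and> j \<le> i \<and> r l \<le> r j \<and> r j < C}"
  have finA: "finite A" unfolding A_def by (rule finite_subset[of _ "{..i}"]) auto
  have AS: "A \<subseteq> sched_jobs S" unfolding A_def sj using i l Ccm by auto
  have sl: "r l \<le> t \<and> t < C" if x: "x \<in> A" and t: "S t = Some x" for x t
  proof
    have "r x \<le> t" using v t unfolding valid_sched_def by auto
    thus "r l \<le> t" using x unfolding A_def by auto
    show "t < C"
    proof (rule ccontr)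
      assume "\<not> t < C"
      hence tC: "C \<le> t" by simp
      have xS: "x \<in> sched_jobs S" using AS x by auto
      have "t + 1 \<le> compl S x" by (rule compl_ge[OF fin[OF xS] t])
      hence "ti < compl S x" using tC ti unfolding C_def by simp
      moreover have "r x \<le> ti" using x ti unfolding A_def C_def by auto
      ultimately have "d i \<le> d x" using e ti(1) xS unfolding edf_def by blast
      show False
      proof (cases "x = i")
        case True
        have "t + 1 \<le> compl S i" using compl_ge[OF fin[OF iS]] t True by simp
        thus False using tC ti unfolding C_def by simp
      next
        case False
        hence "x < i" using x unfolding A_def by auto
        hence "d x < d i" using d_mono[of x i] x i kn unfolding A_def by auto
        thus False using \<open>d i \<le> d x\<close> by simp
      qed
    qed
  qed
  have "sum p A \<le> C - r l" by (rule packing[OF v finA AS sl]) (use rit l ti in \<open>auto simp: C_def\<close>)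
  thus ?thesis using rit ti unfolding C_def A_def load_def by simp
qed



theorem lemma1:
  fixes n :: nat and p r d :: "nat \<Rightarrow> int" and s k i :: nat
  assumes p_pos: "\<And>j. 1 \<le> j \<Longrightarrow> j \<le> n \<Longrightarrow> p j \<ge> 1"
    and d_mono: "\<And>j j'. 1 \<le> j \<Longrightarrow> j < j' \<Longrightarrow> j' \<le> n \<Longrightarrow> d j < d j'"
    and r_dist: "inj_on r {1..n}"
    and feasible: "\<exists>S. valid_sched n p r d S \<and> sched_jobs S = {1..n}"
    and s: "1 \<le> s" "s \<le> n"
    and k: "k \<le> n"
    and i: "1 \<le> i" "i \<le> k"
    and ri: "r i \<ge> r s"
  shows "compl (greedy p r d s k) i \<in>
           {compl S i | S. sk_schedule n p r d s k S \<and> edf r d S \<and> i \<in> sched_jobs S}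
       \<and> (\<forall>S. sk_schedule n p r d s k S \<and> edf r d S \<and> i \<in> sched_jobs S
              \<longrightarrow> compl (greedy p r d s k) i \<le> compl S i)
       \<and> compl (greedy p r d s k) i =
           Max ((\<lambda>l. LEAST b. b > r i \<and> b \<ge> r l + load p r i (r l) b)
                 ` {l. 1 \<le> l \<and> l \<le> i \<and> r s \<le> r l \<and> r l \<le> r i})"
proof -
  interpret GR n p r d s k using p_pos d_mono k by unfold_locales auto
  have iJ: "i \<in> J" using i ri by (auto simp: J_def)
  obtain S0 where S0: "valid_sched n p r d S0" "sched_jobs S0 = {1..n}" using feasible by blast
  have dl: "r s + int (c j) \<le> d j" if j: "j \<in> J" for j
  proof (rule ccontr)
    assume "\<not> ?thesis"
    hence dc: "d j < r s + int (c j)" by simp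
    have jn: "1 \<le> j" "j \<le> n" using j k by (auto simp: J_def)
    have jS: "j \<in> sched_jobs S0" using S0 jn by auto
    have "finite {t. S0 t = Some j}" using slots_fin[OF S0(1) jS] p_pos[OF jn] by blast
    have "int (card {t. S0 t = Some j}) = p j" using S0 jS unfolding valid_sched_def by auto
    hence "card {t. S0 t = Some j} \<noteq> 0" using p_pos[OF jn] by linarith
    hence "{t. S0 t = Some j} \<noteq> {}" by (metis card.empty)
    then obtain t where "S0 t = Some j" by auto
    hence rd: "r j < d j" using S0(1) unfolding valid_sched_def by force
    obtain l where l: "1 \<le> l" "l \<le> j" "r s \<le> r l" "r l \<le> r j"
      "\<forall>b. r l < b \<and> b < r s + int (c j) \<longrightarrow> b < r l + load p r j (r l) b"
      using key[OF j] by blast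
    have lt: "d j < r l + load p r j (r l) (d j)" using l(4,5) rd dc by auto
    define A where "A = {x. 1 \<le> x \<and> x \<le> j \<and> r l \<le> r x \<and> r x < d j}"
    have finA: "finite A" unfolding A_def by (rule finite_subset[of _ "{..j}"]) auto
    have AS: "A \<subseteq> sched_jobs S0" unfolding A_def S0(2) using jn by auto
    have sl: "r l \<le> t \<and> t < d j" if x: "x \<in> A" and t: "S0 t = Some x" for x t
    proof -
      have "r x \<le> t" "t < d x" using S0(1) t unfolding valid_sched_def by auto
      moreover have "d x \<le> d j" using x jn unfolding A_def by (intro d_le) auto
      ultimately show ?thesis using x unfolding A_def by auto
    qed
    have "sum p A \<le> d j - r l" by (rule packing[OF S0(1) finA AS sl]) (use rd l in auto)
    thus False using lt unfolding load_def A_def by simp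
  qed
  have vG: "valid_sched n p r d G"
    unfolding valid_sched_def
  proof (rule conjI; intro allI impI ballI)
    fix t j assume a: "G t = Some j"
    then obtain m where m: "t = r s + int m" "pk m = Some j" using G_iff by blast
    have jA: "j \<in> Av m" using pk_Some[OF m(2)] by blast
    hence jJ: "j \<in> J" by (simp add: Av_def)
    have "m < c j" by (rule pick_lt_c[OF m(2)])
    hence "t < d j" using dl[OF jJ] m by simp
    thus "1 \<le> j \<and> j \<le> n \<and> r j \<le> t \<and> t < d j" using jA jJ k m by (auto simp: Av_def J_def)
  next
    fix j assume "j \<in> sched_jobs G"
    thus "int (card {t. G t = Some j}) = p j" using G_card G_jobs by simp
  qed
  have compl_le: "compl G j \<le> d k" if "j \<in> J" for j
  proof -
    have "d j \<le> d k" using that k by (intro d_le) (auto simp: J_def)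
    thus ?thesis using G_compl[OF that] dl[OF that] by simp
  qed
  have cmG: "cmax r s G = Max (compl G ` J)" unfolding cmax_def G_jobs using iJ by auto
  have skG: "sk_schedule n p r d s k G"
    unfolding sk_schedule_def
  proof (intro conjI)
    show "valid_sched n p r d G" by (rule vG)
    show "cmax r s G \<le> d k" unfolding cmG using finJ iJ compl_le by (subst Max_le_iff) auto
    have "r j < cmax r s G" if "j \<in> J" for j
    proof -
      have "compl G j \<le> cmax r s G" unfolding cmG using finJ that by (intro Max_ge) auto
      thus ?thesis using G_compl[OF that] c_rel[OF that] by simp
    qed
    thus "sched_jobs G = {j. 1 \<le> j \<and> j \<le> k \<and> r s \<le> r j \<and> r j < cmax r s G}"
      unfolding G_jobs by (auto simp: J_def)
  qed
  have edfG: "edf r d G"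
    unfolding edf_def
  proof (intro allI impI ballI)
    fix t j j' assume a: "G t = Some j" and j': "j' \<in> sched_jobs G" and b: "r j' \<le> t \<and> t < compl G j'"
    obtain m where m: "t = r s + int m" "pk m = Some j" using a G_iff by blast
    have j'J: "j' \<in> J" using j' G_jobs by simp
    have "m < c j'" using b m G_compl[OF j'J] by simp
    hence "R m j' > 0" using c_props(2)[OF j'J] by simp
    hence "j' \<in> Av m" using j'J b m by (simp add: Av_def)
    thus "d j \<le> d j'" using pk_Some[OF m(2)] by blast
  qed
  have iG: "i \<in> sched_jobs G" using iJ G_jobs by simp
  define Q where "Q l b \<longleftrightarrow> b > r i \<and> b \<ge> r l + load p r i (r l) b" for l b
  define L0 where "L0 = {l. 1 \<le> l \<and> l \<le> i \<and> r s \<le> r l \<and> r l \<le> r i}"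
  have low: "(LEAST b. Q l b) \<le> compl S i"
    if S: "sk_schedule n p r d s k S" "edf r d S" "i \<in> sched_jobs S" and l: "l \<in> L0" for S l
  proof -
    have "Q l (compl S i)" using lower[OF p_pos d_mono S i k, of l] l unfolding Q_def L0_def by auto
    thus ?thesis using int_least[of "Q l" "compl S i" "r i"] unfolding Q_def by auto
  qed
  obtain l where l: "1 \<le> l" "l \<le> i" "r s \<le> r l" "r l \<le> r i"
     "r l + load p r i (r l) (r s + int (c i)) = r s + int (c i)"
     "\<forall>b. r l < b \<and> b < r s + int (c i) \<longrightarrow> b < r l + load p r i (r l) b"
    using key[OF iJ] by blast
  have lL: "l \<in> L0" using l unfolding L0_def by auto
  have CG: "compl G i = r s + int (c i)" by (rule G_compl[OF iJ])
  have eqL: "(LEAST b. Q l b) = compl G i"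
  proof (rule Least_equality)
    show "Q l (compl G i)" unfolding Q_def CG using l(5) c_rel[OF iJ] by simp
    show "compl G i \<le> y" if "Q l y" for y
    proof (rule ccontr)
      assume "\<not> ?thesis"
      hence "y < r s + int (c i)" unfolding CG by simp
      moreover have "r l < y" using that l(4) unfolding Q_def by simp
      ultimately have "y < r l + load p r i (r l) y" using l(6) by blast
      thus False using that unfolding Q_def by simp
    qed
  qed
  have finL: "finite L0" unfolding L0_def by (rule finite_subset[of _ "{..i}"]) auto
  have maxeq: "compl G i = Max ((\<lambda>l. LEAST b. Q l b) ` L0)"
  proof (rule antisym)
    show "compl G i \<le> Max ((\<lambda>l. LEAST b. Q l b) ` L0)"
      unfolding eqL[symmetric] by (rule Max_ge) (use finL lL in auto)
    show "Max ((\<lambda>l. LEAST b. Q l b) ` L0) \<le> compl G i"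
      using finL lL low[OF skG edfG iG] by (subst Max_le_iff) auto
  qed
  show ?thesis
  proof (intro conjI allI impI)
    show "compl G i \<in> {compl S i | S. sk_schedule n p r d s k S \<and> edf r d S \<and> i \<in> sched_jobs S}"
      using skG edfG iG by blast
    fix S assume S: "sk_schedule n p r d s k S \<and> edf r d S \<and> i \<in> sched_jobs S"
    show "compl G i \<le> compl S i" using low[of S l] S lL eqL by simp
  next
    show "compl G i = Max ((\<lambda>l. LEAST b. b > r i \<and> b \<ge> r l + load p r i (r l) b) ` {l. 1 \<le> l \<and> l \<le> i \<and> r s \<le> r l \<and> r l \<le> r i})"
      using maxeq unfolding Q_def L0_def .
  qed
qed


end
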